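(* For every $n\in\mathcal{N}_{z_q}$ with $n\neq 2\lambda^2$, \[ \sup_{I\subseteq S^1}\Biggl|\frac{1}{|\Gamma_{z_q,n}|}\sum_{\gamma\in\Gamma_{z_q,n}}\mathbf{1}_{\{\theta(\gamma)\in I\}}-\frac{|I|}{2\pi}\Biggr|=\sup_{I\subseteq S^1}\Biggl|\frac{1}{|\mathcal{L}_n|}\sum_{(x,y)\in\mathcal{L}_n}\mathbf{1}_{\{\arg(x+iy)\in I\}}-\frac{|I|}{2\pi}\Biggr|, \] the suprema being over arcs $I$ of $S^1=\mathbb{R}/2\pi\mathbb{Z}$ of length $|I|$.
   Context: Let $q\in\{3,4,7,8,11,19,43,67,163\}$, $z_q=\mu+i\lambda$ with $\mu=0$ if $q\in\{4,8\}$, $\mu=1/2$ otherwise, $\lambda=\sqrt q/2$. $\mathbb{H}$ is the upper half-plane with hyperbolic distance $\rho$, $\cosh\rho(z,w)=1+\frac{|z-w|^2}{2\,\mathrm{Im}(z)\mathrm{Im}(w)}$; $\Gamma=\mathrm{PSL}(2,\mathbb{Z})$; $\mathcal{R}(\gamma;z_q)=2\lambda^2\cosh\rho(z_q,\gamma z_q)$, $\mathcal{N}_{z_q}=\{\mathcal{R}(\gamma;z_q):\gamma\in\Gamma\}$, $\Gamma_{z_q,n}=\{\gamma:\mathcal{R}(\gamma;z_q)=n\}$. For $\gamma z_q\ne z_q$, $\theta(\gamma)$ is the angle that the tangent vector at $z_q$ of the geodesic segment from $z_q$ to $\gamma z_q$ makes with the positive horizontal direction. $\mathcal{L}_n=\{(x,y)\in\mathbb{R}^2: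 x^2+y^2=n^2-4\lambda^4,\ (y-n)/(2\lambda^2)\in\mathbb{Z},\ x/\lambda\in\mathbb{Z}\}$. *)

theory Defs
  imports "HOL-Analysis.Analysis"
begin

definition qs :: "nat set" where "qs = {3,4,7,8,11,19,43,67,163}"
definition mu :: "nat \<Rightarrow> real" where "mu q = (if q \<in> {4,8} then 0 else 1/2)"
definition lam :: "nat \<Rightarrow> real" where "lam q = sqrt (real q) / 2"
definition zq :: "nat \<Rightarrow> complex" where "zq q = Complex (mu q) (lam q)"

definition cosh_rho :: "complex \<Rightarrow> complex \<Rightarrow> real" where
  "cosh_rho z w = 1 + (cmod (z - w))^2 / (2 * Im z * Im w)"

definition SL2Z :: "(int \<times> int \<times> int \<times> int) set" where
  "SL2Z = {(a,b,c,d). a*d - b*c = 1}"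
definition mneg :: "int \<times> int \<times> int \<times> int \<Rightarrow> int \<times> int \<times> int \<times> int" where
  "mneg M = (case M of (a,b,c,d) \<Rightarrow> (-a,-b,-c,-d))"
definition PSL2Z :: "(int \<times> int \<times> int \<times> int) set set" where
  "PSL2Z = {{M, mneg M} | M. M \<in> SL2Z}"

definition moeb :: "int \<times> int \<times> int \<times> int \<Rightarrow> complex \<Rightarrow> complex" where
  "moeb M z = (case M of (a,b,c,d) \<Rightarrow> (of_int a * z + of_int b) / (of_int c * z + of_int d))"
text \<open>Action of a PSL(2,Z) element (well defined: M and -M act identically).\<close>
definition act :: "(int \<times> int \<times> int \<times> int) set \<Rightarrow> complex \<Rightarrow> complex" where
  "act g z = moeb (SOME M. M \<in> g) z"

definition Rval :: "nat \<Rightarrow> (int \<times> int \<times> int \<times> int) set \<Rightarrow> real" where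
  "Rval q g = 2 * (lam q)^2 * cosh_rho (zq q) (act g (zq q))"
definition Nset :: "nat \<Rightarrow> real set" where
  "Nset q = Rval q ` PSL2Z"
definition Gamma_n :: "nat \<Rightarrow> real \<Rightarrow> (int \<times> int \<times> int \<times> int) set set" where
  "Gamma_n q n = {g \<in> PSL2Z. Rval q g = n}"

text \<open>Tangent vector at z (in the upper half-plane) of the hyperbolic geodesic segment
  from z to w \<noteq> z: the geodesic is the vertical line if Re w = Re z, and otherwise the
  semicircle centred at the real point c equidistant from z and w.\<close>
definition geo_tangent :: "complex \<Rightarrow> complex \<Rightarrow> complex" where
  "geo_tangent z w =
     (if Re w = Re z then (if Im w > Im z then \<i> else - \<i>)
      else (let c = ((cmod w)^2 - (cmod z)^2) / (2 * (Re w - Re z)) in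
            if Re w > Re z then \<i> * (of_real c - z) else - \<i> * (of_real c - z)))"

definition theta :: "nat \<Rightarrow> (int \<times> int \<times> int \<times> int) set \<Rightarrow> real" where
  "theta q g = Arg (geo_tangent (zq q) (act g (zq q)))"

definition Lset :: "nat \<Rightarrow> real \<Rightarrow> (real \<times> real) set" where
  "Lset q n = {(x,y). x^2 + y^2 = n^2 - 4 * (lam q)^4 \<and>
                      (y - n) / (2 * (lam q)^2) \<in> \<int> \<and> x / lam q \<in> \<int>}"

text \<open>Arcs of S^1 = R/2piZ: the arc starting at angle a of length l (0 \<le> l \<le> 2pi),
  taken half-open [a, a+l) modulo 2pi.\<close>
definition arcs :: "(real \<times> real) set" where
  "arcs = {(a,l). 0 \<le> l \<and> l \<le> 2 * pi}"
definition in_arc :: "real \<Rightarrow> real \<Rightarrow> real \<Rightarrow> bool" where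
  "in_arc a l t \<longleftrightarrow> (\<exists>k::int. a \<le> t + 2 * pi * of_int k \<and> t + 2 * pi * of_int k < a + l)"

end

theory Submission
  imports Defs
begin


definition tt :: "nat \<Rightarrow> int" where "tt q = (if q \<in> {4,8} then 0 else 1)"
definition NN :: "nat \<Rightarrow> int" where "NN q = (int q + tt q) div 4"

lemma qfacts:
  assumes "q \<in> qs"
  shows "tt q * tt q = tt q" "4 * NN q = int q + tt q" "mu q = real_of_int (tt q) / 2"
        "lam q > 0" "(lam q)^2 = real q / 4" "q \<ge> 3" "tt q = int q mod 2" "NN q \<ge> 1"
  using assms by (auto simp: qs_def tt_def NN_def mu_def lam_def power_divide)

definition mmul :: "int\<times>int\<times>int\<times>int \<Rightarrow> int\<times>int\<times>int\<times>int \<Rightarrow> int\<times>int\<times>int\<times>int" where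
  "mmul M N = (case M of (a,b,c,d) \<Rightarrow> case N of (e,f,g,h) \<Rightarrow> (a*e+b*g, a*f+b*h, c*e+d*g, c*f+d*h))"
definition trm :: "int\<times>int\<times>int\<times>int \<Rightarrow> int\<times>int\<times>int\<times>int" where
  "trm M = (case M of (a,b,c,d) \<Rightarrow> (a,c,b,d))"
definition adj :: "int\<times>int\<times>int\<times>int \<Rightarrow> int\<times>int\<times>int\<times>int" where
  "adj M = (case M of (a,b,c,d) \<Rightarrow> (d,-b,-c,a))"
definition fmat :: "int\<times>int\<times>int \<Rightarrow> int\<times>int\<times>int\<times>int \<Rightarrow> int\<times>int\<times>int" where
  "fmat F M = (case F of (A,B,C) \<Rightarrow> case M of (a,b,c,d) \<Rightarrow>
     (A*a^2+B*a*c+C*c^2, 2*A*a*b+B*(a*d+b*c)+2*C*c*d, A*b^2+B*b*d+C*d^2))"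
definition psi :: "nat \<Rightarrow> int\<times>int\<times>int\<times>int \<Rightarrow> int\<times>int\<times>int" where
  "psi q M = fmat (NN q, tt q, 1) (trm M)"

lemma mmul_simp[simp]: "mmul (a,b,c,d) (e,f,g,h) = (a*e+b*g, a*f+b*h, c*e+d*g, c*f+d*h)"
  by (simp add: mmul_def)
lemma trm_simp[simp]: "trm (a,b,c,d) = (a,c,b,d)" by (simp add: trm_def)
lemma adj_simp[simp]: "adj (a,b,c,d) = (d,-b,-c,a)" by (simp add: adj_def)
lemma fmat_simp[simp]: "fmat (A,B,C) (a,b,c,d) =
     (A*a^2+B*a*c+C*c^2, 2*A*a*b+B*(a*d+b*c)+2*C*c*d, A*b^2+B*b*d+C*d^2)"
  by (simp add: fmat_def)
lemma psi_simp: "psi q (a,b,c,d) = (NN q*a^2+tt q*a*b+b^2, 2*NN q*a*c+tt q*(a*d+c*b)+2*b*d, NN q*c^2+tt q*c*d+d^2)"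
  by (simp add: psi_def)

lemma fmat_comp0: "fmat (fmat (A,B,C) (a,b,c,d)) (e,f,g,h) = fmat (A,B,C) (mmul (a,b,c,d) (e,f,g,h))"
  by (simp add: power2_eq_square algebra_simps)
lemma fmat_comp: "fmat (fmat F M) N = fmat F (mmul M N)"
  by (cases F; cases M; cases N) (simp only: fmat_comp0)

lemma trm_mmul: "trm (mmul M N) = mmul (trm N) (trm M)"
  by (cases M; cases N) (simp add: algebra_simps)

lemma fmat_id[simp]: "fmat F (1,0,0,1) = F" by (cases F) simp

lemma mmul_adj: "M \<in> SL2Z \<Longrightarrow> mmul M (adj M) = (1,0,0,1)" "M \<in> SL2Z \<Longrightarrow> mmul (adj M) M = (1,0,0,1)"
  by (cases M; auto simp: SL2Z_def algebra_simps)+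

lemma mmul_assoc: "mmul (mmul M N) P = mmul M (mmul N P)"
  by (cases M; cases N; cases P) (simp add: algebra_simps)

lemma det_mul: "((a::int)*e+b*g)*(c*f+d*h) - (a*f+b*h)*(c*e+d*g) = (a*d-b*c)*(e*h-f*g)"
  by algebra
lemma SL_mmul: "M \<in> SL2Z \<Longrightarrow> N \<in> SL2Z \<Longrightarrow> mmul M N \<in> SL2Z"
  by (cases M; cases N) (simp add: SL2Z_def det_mul)

lemma SL_adj: "M \<in> SL2Z \<Longrightarrow> adj M \<in> SL2Z" "M \<in> SL2Z \<Longrightarrow> trm M \<in> SL2Z"
  by (cases M; auto simp: SL2Z_def algebra_simps)+

definition disc :: "int\<times>int\<times>int \<Rightarrow> int" where "disc F = (case F of (A,B,C) \<Rightarrow> B^2-4*A*C)"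
lemma disc_simp[simp]: "disc (A,B,C) = B^2-4*A*C" by (simp add: disc_def)
lemma disc_poly: "(2*A*a*b+B*(a*d+b*c)+2*C*c*d)^2 - 4*(A*a^2+B*a*c+C*c^2)*(A*b^2+B*b*d+C*d^2) = ((a::int)*d-b*c)^2 * (B^2-4*A*C)"
  by algebra
lemma disc_fmat0: "disc (fmat (A,B,C) (a,b,c,d)) = (a*d-b*c)^2 * disc (A,B,C)"
  apply (simp only: fmat_simp disc_simp)
  by (rule disc_poly)
lemma disc_fmat: "M \<in> SL2Z \<Longrightarrow> disc (fmat F M) = disc F"
  by (cases F; cases M) (simp only: disc_fmat0, simp add: SL2Z_def)

lemma reduced_unique:
  fixes A B C :: int
  assumes q: "q \<in> qs" and h1: "-A < B" "B \<le> A" "A \<le> C" and d: "4*A*C - B^2 = int q"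
  shows "A = 1 \<and> B = tt q \<and> C = NN q"
proof -
  have Ap: "A > 0" using h1 by linarith
  have "B^2 \<le> A^2" using h1 by (simp add: abs_le_square_iff[symmetric] abs_le_iff)
  moreover have "A*A \<le> A*C" using Ap h1 by simp
  ultimately have q3: "3*A*A \<le> int q" using d by (simp add: power2_eq_square)
  moreover have "int q \<le> 163" using q by (auto simp: qs_def)
  ultimately have "3*A*A \<le> 163" by linarith
  have "A \<le> 7"
  proof (rule ccontr)
    assume "\<not> A \<le> 7" hence "A \<ge> 8" by simp
    hence "A*A \<ge> 8*8" by (intro mult_mono) auto
    thus False using \<open>3*A*A \<le> 163\<close> by linarith
  qed
  hence Ac: "A = 1 \<or> A = 2 \<or> A = 3 \<or> A = 4 \<or> A = 5 \<or> A = 6 \<or> A = 7" using Ap by presburger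
  have Bc: "B = -6 \<or> B = -5 \<or> B = -4 \<or> B = -3 \<or> B = -2 \<or> B = -1 \<or> B = 0 \<or> B = 1 \<or> B = 2 \<or> B = 3 \<or> B = 4 \<or> B = 5 \<or> B = 6 \<or> B = 7" using h1 \<open>A \<le> 7\<close> by presburger
  have qc: "q = 3 \<or> q = 4 \<or> q = 7 \<or> q = 8 \<or> q = 11 \<or> q = 19 \<or> q = 43 \<or> q = 67 \<or> q = 163" using q by (auto simp: qs_def)
  have c_3_1: "q = 3 \<Longrightarrow> A = 1 \<Longrightarrow> ?thesis"
  proof -
    assume e: "q = 3" "A = 1"
    have "B = 0 \<or> B = 1" using h1 e by presburger
    then show ?thesis using d e by (elim disjE; simp add: tt_def NN_def; presburger)
  qed
  have c_4_1: "q = 4 \<Longrightarrow> A = 1 \<Longrightarrow> ?thesis"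
  proof -
    assume e: "q = 4" "A = 1"
    have "B = 0 \<or> B = 1" using h1 e by presburger
    then show ?thesis using d e by (elim disjE; simp add: tt_def NN_def; presburger)
  qed
  have c_7_1: "q = 7 \<Longrightarrow> A = 1 \<Longrightarrow> ?thesis"
  proof -
    assume e: "q = 7" "A = 1"
    have "B = 0 \<or> B = 1" using h1 e by presburger
    then show ?thesis using d e by (elim disjE; simp add: tt_def NN_def; presburger)
  qed
  have c_8_1: "q = 8 \<Longrightarrow> A = 1 \<Longrightarrow> ?thesis"
  proof -
    assume e: "q = 8" "A = 1"
    have "B = 0 \<or> B = 1" using h1 e by presburger
    then show ?thesis using d e by (elim disjE; simp add: tt_def NN_def; presburger)
  qed
  have c_11_1: "q = 11 \<Longrightarrow> A = 1 \<Longrightarrow> ?thesis"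
  proof -
    assume e: "q = 11" "A = 1"
    have "B = 0 \<or> B = 1" using h1 e by presburger
    then show ?thesis using d e by (elim disjE; simp add: tt_def NN_def; presburger)
  qed
  have c_19_1: "q = 19 \<Longrightarrow> A = 1 \<Longrightarrow> ?thesis"
  proof -
    assume e: "q = 19" "A = 1"
    have "B = 0 \<or> B = 1" using h1 e by presburger
    then show ?thesis using d e by (elim disjE; simp add: tt_def NN_def; presburger)
  qed
  have c_19_2: "q = 19 \<Longrightarrow> A = 2 \<Longrightarrow> ?thesis"
  proof -
    assume e: "q = 19" "A = 2"
    have "B = -1 \<or> B = 0 \<or> B = 1 \<or> B = 2" using h1 e by presburger
    then show ?thesis using d e by (elim disjE; simp add: tt_def NN_def; presburger)
  qed
  have c_43_1: "q = 43 \<Longrightarrow> A = 1 \<Longrightarrow> ?thesis"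
  proof -
    assume e: "q = 43" "A = 1"
    have "B = 0 \<or> B = 1" using h1 e by presburger
    then show ?thesis using d e by (elim disjE; simp add: tt_def NN_def; presburger)
  qed
  have c_43_2: "q = 43 \<Longrightarrow> A = 2 \<Longrightarrow> ?thesis"
  proof -
    assume e: "q = 43" "A = 2"
    have "B = -1 \<or> B = 0 \<or> B = 1 \<or> B = 2" using h1 e by presburger
    then show ?thesis using d e by (elim disjE; simp add: tt_def NN_def; presburger)
  qed
  have c_43_3: "q = 43 \<Longrightarrow> A = 3 \<Longrightarrow> ?thesis"
  proof -
    assume e: "q = 43" "A = 3"
    have "B = -2 \<or> B = -1 \<or> B = 0 \<or> B = 1 \<or> B = 2 \<or> B = 3" using h1 e by presburger
    then show ?thesis using d e by (elim disjE; simp add: tt_def NN_def; presburger)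
  qed
  have c_67_1: "q = 67 \<Longrightarrow> A = 1 \<Longrightarrow> ?thesis"
  proof -
    assume e: "q = 67" "A = 1"
    have "B = 0 \<or> B = 1" using h1 e by presburger
    then show ?thesis using d e by (elim disjE; simp add: tt_def NN_def; presburger)
  qed
  have c_67_2: "q = 67 \<Longrightarrow> A = 2 \<Longrightarrow> ?thesis"
  proof -
    assume e: "q = 67" "A = 2"
    have "B = -1 \<or> B = 0 \<or> B = 1 \<or> B = 2" using h1 e by presburger
    then show ?thesis using d e by (elim disjE; simp add: tt_def NN_def; presburger)
  qed
  have c_67_3: "q = 67 \<Longrightarrow> A = 3 \<Longrightarrow> ?thesis"
  proof -
    assume e: "q = 67" "A = 3"
    have "B = -2 \<or> B = -1 \<or> B = 0 \<or> B = 1 \<or> B = 2 \<or> B = 3" using h1 e by presburger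
    then show ?thesis using d e by (elim disjE; simp add: tt_def NN_def; presburger)
  qed
  have c_67_4: "q = 67 \<Longrightarrow> A = 4 \<Longrightarrow> ?thesis"
  proof -
    assume e: "q = 67" "A = 4"
    have "B = -3 \<or> B = -2 \<or> B = -1 \<or> B = 0 \<or> B = 1 \<or> B = 2 \<or> B = 3 \<or> B = 4" using h1 e by presburger
    then show ?thesis using d e by (elim disjE; simp add: tt_def NN_def; presburger)
  qed
  have c_163_1: "q = 163 \<Longrightarrow> A = 1 \<Longrightarrow> ?thesis"
  proof -
    assume e: "q = 163" "A = 1"
    have "B = 0 \<or> B = 1" using h1 e by presburger
    then show ?thesis using d e by (elim disjE; simp add: tt_def NN_def; presburger)
  qed
  have c_163_2: "q = 163 \<Longrightarrow> A = 2 \<Longrightarrow> ?thesis"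
  proof -
    assume e: "q = 163" "A = 2"
    have "B = -1 \<or> B = 0 \<or> B = 1 \<or> B = 2" using h1 e by presburger
    then show ?thesis using d e by (elim disjE; simp add: tt_def NN_def; presburger)
  qed
  have c_163_3: "q = 163 \<Longrightarrow> A = 3 \<Longrightarrow> ?thesis"
  proof -
    assume e: "q = 163" "A = 3"
    have "B = -2 \<or> B = -1 \<or> B = 0 \<or> B = 1 \<or> B = 2 \<or> B = 3" using h1 e by presburger
    then show ?thesis using d e by (elim disjE; simp add: tt_def NN_def; presburger)
  qed
  have c_163_4: "q = 163 \<Longrightarrow> A = 4 \<Longrightarrow> ?thesis"
  proof -
    assume e: "q = 163" "A = 4"
    have "B = -3 \<or> B = -2 \<or> B = -1 \<or> B = 0 \<or> B = 1 \<or> B = 2 \<or> B = 3 \<or> B = 4" using h1 e by presburger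
    then show ?thesis using d e by (elim disjE; simp add: tt_def NN_def; presburger)
  qed
  have c_163_5: "q = 163 \<Longrightarrow> A = 5 \<Longrightarrow> ?thesis"
  proof -
    assume e: "q = 163" "A = 5"
    have "B = -4 \<or> B = -3 \<or> B = -2 \<or> B = -1 \<or> B = 0 \<or> B = 1 \<or> B = 2 \<or> B = 3 \<or> B = 4 \<or> B = 5" using h1 e by presburger
    then show ?thesis using d e by (elim disjE; simp add: tt_def NN_def; presburger)
  qed
  have c_163_6: "q = 163 \<Longrightarrow> A = 6 \<Longrightarrow> ?thesis"
  proof -
    assume e: "q = 163" "A = 6"
    have "B = -5 \<or> B = -4 \<or> B = -3 \<or> B = -2 \<or> B = -1 \<or> B = 0 \<or> B = 1 \<or> B = 2 \<or> B = 3 \<or> B = 4 \<or> B = 5 \<or> B = 6" using h1 e by presburger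
    then show ?thesis using d e by (elim disjE; simp add: tt_def NN_def; presburger)
  qed
  have c_163_7: "q = 163 \<Longrightarrow> A = 7 \<Longrightarrow> ?thesis"
  proof -
    assume e: "q = 163" "A = 7"
    have "B = -6 \<or> B = -5 \<or> B = -4 \<or> B = -3 \<or> B = -2 \<or> B = -1 \<or> B = 0 \<or> B = 1 \<or> B = 2 \<or> B = 3 \<or> B = 4 \<or> B = 5 \<or> B = 6 \<or> B = 7" using h1 e by presburger
    then show ?thesis using d e by (elim disjE; simp add: tt_def NN_def; presburger)
  qed
  have q3': "3*A*A \<le> int q" by fact
  from qc Ac q3' have P: "(q = 3 \<and> A = 1) \<or> (q = 4 \<and> A = 1) \<or> (q = 7 \<and> A = 1) \<or> (q = 8 \<and> A = 1) \<or> (q = 11 \<and> A = 1) \<or> (q = 19 \<and> A = 1) \<or> (q = 19 \<and> A = 2) \<or> (q = 43 \<and> A = 1) \<or> (q = 43 \<and> A = 2) \<or> (q = 43 \<and> A = 3) \<or> (q = 67 \<and> A = 1) \<or> (q = 67 \<and> A = 2) \<or> (q = 67 \<and> A = 3) \<or> (q = 67 \<and> A = 4) \<or> (q = 163 \<and> A = 1) \<or> (q = 163 \<and> A = 2) \<or> (q = 163 \<and> A = 3) \<or> (q = 163 \<and> A = 4) \<or> (q = 163 \<and> A = 5) \<or> (q = 163 \<and> A = 6) \<or> (q = 163 \<and> A = 7)" by (elim disjE) simp_all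
  then show ?thesis
  proof (elim disjE conjE)
    assume "q = 3" "A = 1" then show ?thesis by (rule c_3_1)
  next
    assume "q = 4" "A = 1" then show ?thesis by (rule c_4_1)
  next
    assume "q = 7" "A = 1" then show ?thesis by (rule c_7_1)
  next
    assume "q = 8" "A = 1" then show ?thesis by (rule c_8_1)
  next
    assume "q = 11" "A = 1" then show ?thesis by (rule c_11_1)
  next
    assume "q = 19" "A = 1" then show ?thesis by (rule c_19_1)
  next
    assume "q = 19" "A = 2" then show ?thesis by (rule c_19_2)
  next
    assume "q = 43" "A = 1" then show ?thesis by (rule c_43_1)
  next
    assume "q = 43" "A = 2" then show ?thesis by (rule c_43_2)
  next
    assume "q = 43" "A = 3" then show ?thesis by (rule c_43_3)
  next
    assume "q = 67" "A = 1" then show ?thesis by (rule c_67_1)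
  next
    assume "q = 67" "A = 2" then show ?thesis by (rule c_67_2)
  next
    assume "q = 67" "A = 3" then show ?thesis by (rule c_67_3)
  next
    assume "q = 67" "A = 4" then show ?thesis by (rule c_67_4)
  next
    assume "q = 163" "A = 1" then show ?thesis by (rule c_163_1)
  next
    assume "q = 163" "A = 2" then show ?thesis by (rule c_163_2)
  next
    assume "q = 163" "A = 3" then show ?thesis by (rule c_163_3)
  next
    assume "q = 163" "A = 4" then show ?thesis by (rule c_163_4)
  next
    assume "q = 163" "A = 5" then show ?thesis by (rule c_163_5)
  next
    assume "q = 163" "A = 6" then show ?thesis by (rule c_163_6)
  next
    assume "q = 163" "A = 7" then show ?thesis by (rule c_163_7)
  qed
qed



lemma zq_eq: "q \<in> qs \<Longrightarrow> zq q = Complex (real_of_int (tt q)/2) (lam q)"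
  by (simp add: zq_def qfacts)

lemma real_id1:
  fixes a b c d t N l :: real
  assumes "a*d - b*c = 1" "t*t = t" "l^2 = N - t/4"
  shows "(2*a*c*N + (a*d+c*b)*t + 2*b*d) * (c*(t/2)+d) - 2*c*l^2 = 2*(N*c^2+t*c*d+d^2)*(a*(t/2)+b)"
  using assms by algebra

lemma real_id2:
  fixes a b c d t N l :: real
  assumes "a*d - b*c = 1" "t*t = t" "l^2 = N - t/4"
  shows "(2*a*c*N + (a*d+c*b)*t + 2*b*d) * c + 2*(c*(t/2)+d) = 2*a*(N*c^2+t*c*d+d^2)"
  using assms by algebra

lemma moeb_psi:
  assumes q: "q \<in> qs" and M: "(a,b,c,d) \<in> SL2Z" and P: "psi q (a,b,c,d) = (A,B,C)"
  shows "C > 0" "moeb (a,b,c,d) (zq q) = Complex (of_int B/(2 * of_int C)) (lam q / of_int C)"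
proof -
  have det: "a*d - b*c = 1" using M by (simp add: SL2Z_def)
  have eA: "A = NN q*a^2+tt q*a*b+b^2" and eB: "B = 2*NN q*a*c+tt q*(a*d+c*b)+2*b*d"
    and eC: "C = NN q*c^2+tt q*c*d+d^2" using P by (simp_all add: psi_simp)
  have e4: "4*C = (2*d + tt q*c)^2 + int q * c^2"
    using qfacts(1,2)[OF q] unfolding eC by (simp add: power2_eq_square algebra_simps)
  have qp: "int q > 0" using qfacts(6)[OF q] by simp
  show Cpos: "C > 0"
  proof (rule ccontr)
    assume "\<not> C > 0"
    hence s: "(2*d + tt q*c)^2 + int q * c^2 \<le> 0" using e4 by linarith
    have "int q * c^2 \<ge> 0" using qp by simp
    hence "int q * c^2 = 0" using s zero_le_power2[of "2*d + tt q*c"] by linarith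
    hence c0: "c = 0" using qp by simp
    with s have "d = 0" by simp
    with c0 det show False by simp
  qed
  define t where "t = real_of_int (tt q)"
  define N where "N = real_of_int (NN q)"
  define l where "l = lam q"
  have tt: "t*t = t" unfolding t_def using qfacts(1)[OF q] by (simp flip: of_int_mult)
  have "real_of_int (4 * NN q) = real_of_int (int q + tt q)" using qfacts(2)[OF q] by simp
  hence "4 * N = real q + t" unfolding N_def t_def by simp
  hence ll: "l^2 = N - t/4" unfolding l_def using qfacts(5)[OF q] by simp
  have lpos: "l > 0" unfolding l_def using qfacts(4)[OF q] .
  have detr: "real_of_int a * real_of_int d - real_of_int b * real_of_int c = 1"
    using det by (metis of_int_1 of_int_diff of_int_mult)
  have rB: "real_of_int B = 2*a*c*N + (a*d+c*b)*t + 2*b*d" unfolding eB t_def N_def by simp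
  have rC: "real_of_int C = N*c^2+t*c*d+d^2" unfolding eC t_def N_def by simp
  have Cr: "real_of_int C > 0" using Cpos by simp
  have z: "zq q = Complex (t/2) l" unfolding t_def l_def by (rule zq_eq[OF q])
  have den: "of_int c * zq q + of_int d = Complex (c*(t/2)+d) (c*l)" unfolding z
    by (simp add: complex_eq_iff)
  have num: "of_int a * zq q + of_int b = Complex (a*(t/2)+b) (a*l)" unfolding z
    by (simp add: complex_eq_iff)
  have dnz: "Complex (c*(t/2)+d) (c*l) \<noteq> 0"
  proof
    assume "Complex (c*(t/2)+d) (c*l) = 0"
    hence "c*l = 0" "c*(t/2)+d = 0" by (simp_all add: complex_eq_iff)
    hence "c = 0" "d = 0" using lpos by simp_all
    thus False using det by simp
  qed
  have k1: "real_of_int B*(c*(t/2)+d) - 2*c*l^2 = 2*real_of_int C*(a*(t/2)+b)"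
    unfolding rB rC using real_id1[OF detr tt ll] by simp
  have k2: "real_of_int B*c + 2*(c*(t/2)+d) = 2*a*real_of_int C"
    unfolding rB rC using real_id2[OF detr tt ll] by simp
  have "B/(2*C)*(c*(t/2)+d) - l/C*(c*l) = (real_of_int B*(c*(t/2)+d) - 2*c*l^2)/(2*C)"
    using Cr by (simp add: field_simps power2_eq_square)
  also have "\<dots> = a*(t/2)+b" unfolding k1 using Cr by simp
  finally have i1: "B/(2*C)*(c*(t/2)+d) - l/C*(c*l) = a*(t/2)+b" .
  have "B/(2*C)*(c*l) + l/C*(c*(t/2)+d) = l*(real_of_int B*c + 2*(c*(t/2)+d))/(2*C)"
    using Cr by (simp add: field_simps)
  also have "\<dots> = a*l" unfolding k2 using Cr by simp
  finally have i2: "B/(2*C)*(c*l) + l/C*(c*(t/2)+d) = a*l" .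
  have "Complex (B/(2*C)) (l/C) * Complex (c*(t/2)+d) (c*l) = Complex (a*(t/2)+b) (a*l)"
    using i1 i2 by (simp add: complex_eq_iff)
  thus "moeb (a,b,c,d) (zq q) = Complex (of_int B/(2 * of_int C)) (lam q / of_int C)"
    unfolding moeb_def using dnz num den l_def by (simp add: divide_eq_eq)
qed


lemma moeb_mneg0: "moeb (mneg (a,b,c,d)) z = moeb (a,b,c,d) z"
proof -
  have e1: "of_int (-a) * z + of_int (-b) = - (of_int a * z + of_int b)" by simp
  have e2: "of_int (-c) * z + of_int (-d) = - (of_int c * z + of_int d)" by simp
  show ?thesis unfolding moeb_def mneg_def by (simp only: prod.case e1 e2 minus_divide_divide)
qed
lemma moeb_mneg: "moeb (mneg M) z = moeb M z"
  by (cases M) (simp only: moeb_mneg0)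

lemma act_pair: "act {M, mneg M} z = moeb M z"
proof -
  have "(SOME M'. M' \<in> {M, mneg M}) \<in> {M, mneg M}" by (rule someI[of _ M]) simp
  thus ?thesis unfolding act_def using moeb_mneg[of M z] by auto
qed

lemma psi_disc:
  assumes q: "q \<in> qs" and M: "M \<in> SL2Z"
  shows "4 * fst (psi q M) * snd (snd (psi q M)) - (fst (snd (psi q M)))^2 = int q"
proof -
  have "disc (psi q M) = disc (NN q, tt q, 1)" unfolding psi_def by (rule disc_fmat[OF SL_adj(2)[OF M]])
  moreover have "disc (NN q, tt q, 1) = - int q" using qfacts(1,2)[OF q] by (simp add: power2_eq_square)
  ultimately show ?thesis by (cases "psi q M") simp
qed

lemma real_id3:
  fixes A B C t N l :: real
  assumes "C > 0" "l > 0" "l^2 = N - t/4" "t*t = t" "4*A*C - B^2 = 4*N - t"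
  shows "2*l^2*(1 + ((t/2 - B/(2*C))^2 + (l - l/C)^2)/(2*l*(l/C))) = A - t*B/2 + N*C"
proof -
  have e: "2*l^2*(1 + ((t/2 - B/(2*C))^2 + (l - l/C)^2)/(2*l*(l/C)))
        = (8*l^2*C + (t*C - B)^2 + 4*l^2*(C-1)^2)/(4*C)"
    using assms(1,2) by (simp add: field_simps power2_eq_square)
  have "8*l^2*C + (t*C - B)^2 + 4*l^2*(C-1)^2 = 4*C*(A - t*B/2 + N*C)"
    using assms(3,4,5) by algebra
  thus ?thesis unfolding e using assms(1) by simp
qed

lemma Rval_psi:
  assumes q: "q \<in> qs" and M: "(a,b,c,d) \<in> SL2Z" and P: "psi q (a,b,c,d) = (A,B,C)"
  shows "Rval q {(a,b,c,d), mneg (a,b,c,d)} = of_int A - of_int (tt q) * of_int B / 2 + of_int (NN q) * of_int C"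
proof -
  define t where "t = real_of_int (tt q)"
  define N where "N = real_of_int (NN q)"
  define l where "l = lam q"
  have tt: "t*t = t" unfolding t_def using qfacts(1)[OF q] by (simp flip: of_int_mult)
  have "real_of_int (4 * NN q) = real_of_int (int q + tt q)" using qfacts(2)[OF q] by simp
  hence N4: "4 * N = real q + t" unfolding N_def t_def by simp
  hence ll: "l^2 = N - t/4" unfolding l_def using qfacts(5)[OF q] by simp
  have lpos: "l > 0" unfolding l_def using qfacts(4)[OF q] .
  have Cpos: "C > 0" using moeb_psi(1)[OF q M P] .
  have d: "4*A*C - B^2 = int q" using psi_disc[OF q M] P by simp
  hence "real_of_int (4*A*C - B^2) = real q" by simp
  hence dr: "4* of_int A* of_int C - (of_int B)^2 = 4*N - t" using N4 by simp
  have w: "act {(a,b,c,d), mneg (a,b,c,d)} (zq q) = Complex (of_int B/(2 * of_int C)) (l / of_int C)"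
    unfolding act_pair moeb_psi(2)[OF q M P] l_def ..
  have z: "zq q = Complex (t/2) l" unfolding t_def l_def by (rule zq_eq[OF q])
  have "Rval q {(a,b,c,d), mneg (a,b,c,d)} =
     2*l^2*(1 + ((t/2 - of_int B/(2 * of_int C))^2 + (l - l/of_int C)^2)/(2*l*(l/of_int C)))"
    unfolding Rval_def cosh_rho_def w unfolding z l_def[symmetric] by (simp add: cmod_power2)
  also have "\<dots> = of_int A - t * of_int B / 2 + N * of_int C"
    by (rule real_id3) (use Cpos lpos ll tt dr in auto)
  finally show ?thesis unfolding t_def N_def .
qed


lemma real_id4:
  fixes A B C t N l :: real
  assumes C: "C > 0" and dl: "B - t*C \<noteq> 0" and ll: "l^2 = N - t/4" and tt: "t*t = t"
    and d: "4*A*C - B^2 = 4*N - t"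
  shows "(B - t*C) * (((B/(2*C))^2 + (l/C)^2 - ((t/2)^2 + l^2)) / (2*(B/(2*C) - t/2)) - t/2)
         = A - t*B/2 + N*C - (4*N - t)*C/2"
proof -
  define \<delta> where "\<delta> = B - t*C"
  have h1: "B/(2*C) - t/2 = \<delta>/(2*C)" unfolding \<delta>_def using C by (simp add: field_simps)
  have h2: "(B/(2*C))^2 + (l/C)^2 - ((t/2)^2 + l^2) = (B^2 + 4*l^2 - t*C^2 - 4*l^2*C^2)/(4*C^2)"
    using C tt by (simp add: field_simps power2_eq_square)
  have dz: "\<delta> \<noteq> 0" using dl unfolding \<delta>_def .
  have h3: "\<delta> * (((B^2 + 4*l^2 - t*C^2 - 4*l^2*C^2)/(4*C^2)) / (2*(\<delta>/(2*C))) - t/2)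
      = ((B^2 + 4*l^2 - t*C^2 - 4*l^2*C^2) - 2*t*C*\<delta>)/(4*C)"
    using C dz by (simp add: field_simps power2_eq_square)
  have h4: "(B^2 + 4*l^2 - t*C^2 - 4*l^2*C^2) - 2*t*C*\<delta> = 4*C*(A - t*B/2 + N*C - (4*N - t)*C/2)"
    unfolding \<delta>_def using ll tt d by algebra
  show ?thesis unfolding h1 h2 \<delta>_def[symmetric] h3 h4 using C by simp
qed

lemma real_id5:
  fixes A B C t N :: real
  assumes C: "C > 0" and tt: "t*t = t" and d: "4*A*C - B^2 = 4*N - t" and B: "B = t*C"
  shows "A - t*B/2 + N*C - (4*N - t)*C/2 = (4*N - t)*(1 - C^2)/(4*C)"
proof -
  have e: "4*C*(A - t*B/2 + N*C - (4*N - t)*C/2) = 4*A*C - 2*t*B*C + 4*N*C^2 - 2*(4*N - t)*C^2"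
    by (simp add: field_simps power2_eq_square)
  have t01: "t = 0 \<or> t = 1" using tt by (metis mult_cancel_right1 mult_eq_0_iff)
  have "4*A*C = (t*C)^2 + 4*N - t" using d B by simp
  hence "4*A*C - 2*t*B*C + 4*N*C^2 - 2*(4*N - t)*C^2 = (t*C)^2 + 4*N - t - 2*t*(t*C)*C + 4*N*C^2 - 2*(4*N - t)*C^2"
    using B by simp
  also have "\<dots> = (4*N - t)*(1 - C^2)" using t01 by (auto simp: algebra_simps power2_eq_square)
  finally have "4*A*C - 2*t*B*C + 4*N*C^2 - 2*(4*N - t)*C^2 = (4*N - t)*(1 - C^2)" .
  hence "4*C*(A - t*B/2 + N*C - (4*N - t)*C/2) = (4*N - t)*(1 - C^2)" using e by simp
  thus ?thesis using C by (simp add: field_simps)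
qed

lemma theta_psi:
  assumes q: "q \<in> qs" and M: "(a,b,c,d) \<in> SL2Z" and P: "psi q (a,b,c,d) = (A,B,C)"
    and hn: "of_int A - of_int (tt q) * of_int B / 2 + of_int (NN q) * of_int C \<noteq> real q / 2"
  shows "theta q {(a,b,c,d), mneg (a,b,c,d)} = Arg (Complex (lam q * (of_int B - of_int (tt q) * of_int C))
     (of_int A - of_int (tt q) * of_int B / 2 + of_int (NN q) * of_int C - real q * of_int C / 2))"
proof -
  define t where "t = real_of_int (tt q)"
  define N where "N = real_of_int (NN q)"
  define l where "l = lam q"
  define x where "x = l * (of_int B - t * of_int C)"
  define y where "y = of_int A - t * of_int B / 2 + N * of_int C - real q * of_int C / 2"
  have tt: "t*t = t" unfolding t_def using qfacts(1)[OF q] by (simp flip: of_int_mult)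
  have "real_of_int (4 * NN q) = real_of_int (int q + tt q)" using qfacts(2)[OF q] by simp
  hence N4: "4 * N = real q + t" unfolding N_def t_def by simp
  hence ll: "l^2 = N - t/4" unfolding l_def using qfacts(5)[OF q] by simp
  have qr: "real q = 4*N - t" using N4 by simp
  have lpos: "l > 0" unfolding l_def using qfacts(4)[OF q] .
  have Cpos: "C > 0" using moeb_psi(1)[OF q M P] .
  have Cr: "real_of_int C > 0" using Cpos by simp
  have d: "4*A*C - B^2 = int q" using psi_disc[OF q M] P by simp
  hence "real_of_int (4*A*C - B^2) = real q" by simp
  hence dr: "4* of_int A* of_int C - (of_int B)^2 = 4*N - t" using N4 by simp
  define w where "w = Complex (of_int B/(2 * of_int C)) (l / of_int C)"
  have wd: "act {(a,b,c,d), mneg (a,b,c,d)} (zq q) = w"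
    unfolding act_pair moeb_psi(2)[OF q M P] l_def w_def ..
  have z: "zq q = Complex (t/2) l" unfolding t_def l_def by (rule zq_eq[OF q])
  have th: "theta q {(a,b,c,d), mneg (a,b,c,d)} = Arg (geo_tangent (Complex (t/2) l) w)"
    unfolding theta_def wd unfolding z ..
  have goal: "Arg (geo_tangent (Complex (t/2) l) w) = Arg (Complex x y)"
  proof (cases "of_int B = t * of_int C")
    case True
    have C1: "C \<noteq> 1"
    proof
      assume "C = 1"
      hence "4 * of_int A = 4*N - t + t" using dr True tt by (simp add: power2_eq_square)
      hence "of_int A = N" by simp
      hence "of_int A - t * of_int B / 2 + N * of_int C = 2*N - t*t/2" using True \<open>C = 1\<close> by simp
      also have "\<dots> = real q / 2" using tt qr by simp
      finally have "of_int A - t * of_int B / 2 + N * of_int C = real q / 2" .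
      thus False using hn unfolding t_def N_def by simp
    qed
    hence "C \<ge> 2" using Cpos by simp
    hence C2: "real_of_int C \<ge> 2" by linarith
    have Re: "Re w = Re (Complex (t/2) l)" unfolding w_def using True Cr by (simp add: field_simps)
    have "Im w < l" unfolding w_def using C2 lpos by (simp add: divide_less_eq)
    hence geo: "geo_tangent (Complex (t/2) l) w = - \<i>" unfolding geo_tangent_def using Re by simp
    have x0: "x = 0" unfolding x_def using True by simp
    have "y = (4*N - t)*(1 - (of_int C)^2)/(4* of_int C)"
      unfolding y_def qr by (rule real_id5[OF Cr tt dr True])
    moreover have "4*N - t > 0" using qr qfacts(6)[OF q] by simp
    moreover have "(of_int C)^2 > (1::real)"
    proof -
      have "of_int C * of_int C \<ge> (2::real)*2" using C2 by (intro mult_mono) auto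
      thus ?thesis by (simp add: power2_eq_square)
    qed
    ultimately have yneg: "y < 0" using Cr by (simp add: divide_neg_pos mult_pos_neg)
    have e: "Complex x y = of_real (-y) * (- \<i>)" using x0 by (simp add: complex_eq_iff)
    have "Arg (Complex x y) = Arg (- \<i>)" unfolding e by (rule Arg_times_of_real) (use yneg in simp)
    thus ?thesis using geo by simp
  next
    case False
    define \<delta> where "\<delta> = of_int B - t * of_int C"
    have dz: "\<delta> \<noteq> 0" using False unfolding \<delta>_def by simp
    define c0 where "c0 = ((cmod w)^2 - (cmod (Complex (t/2) l))^2) / (2 * (Re w - Re (Complex (t/2) l)))"
    have c0e: "c0 = (((of_int B/(2 * of_int C))^2 + (l/of_int C)^2 - ((t/2)^2 + l^2)) / (2*(of_int B/(2 * of_int C) - t/2)))"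
      unfolding c0_def w_def by (simp add: cmod_power2)
    have yid: "\<delta> * (c0 - t/2) = y"
      unfolding c0e \<delta>_def y_def qr by (rule real_id4[OF Cr _ ll tt dr]) (use dz \<delta>_def in simp)
    have key: "Complex x y = of_real \<delta> * (\<i> * (of_real c0 - Complex (t/2) l))"
      using yid unfolding x_def \<delta>_def by (simp add: complex_eq_iff algebra_simps)
    have ReD: "Re w - Re (Complex (t/2) l) = \<delta> / (2 * of_int C)"
      unfolding w_def \<delta>_def using Cr by (simp add: field_simps)
    show ?thesis
    proof (cases "\<delta> > 0")
      case True
      hence "\<delta> / (2 * of_int C) > 0" using Cr by simp
      hence "Re w > Re (Complex (t/2) l)" using ReD by linarith
      hence "geo_tangent (Complex (t/2) l) w = \<i> * (of_real c0 - Complex (t/2) l)"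
        unfolding geo_tangent_def c0_def Let_def by simp
      thus ?thesis unfolding key by (simp only:) (rule sym, rule Arg_times_of_real[OF True])
    next
      case False
      hence dn: "\<delta> < 0" using dz by simp
      hence "\<delta> / (2 * of_int C) < 0" using Cr by (simp add: divide_neg_pos)
      hence "Re w < Re (Complex (t/2) l)" using ReD by linarith
      hence "geo_tangent (Complex (t/2) l) w = - \<i> * (of_real c0 - Complex (t/2) l)"
        unfolding geo_tangent_def c0_def Let_def by auto
      moreover have "Complex x y = of_real (-\<delta>) * (- \<i> * (of_real c0 - Complex (t/2) l))"
        using key by simp
      ultimately show ?thesis by (simp only:) (rule sym, rule Arg_times_of_real, use dn in simp)
    qed
  qed
  have "theta q {(a,b,c,d), mneg (a,b,c,d)} = Arg (Complex x y)" using th goal by simp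
  thus ?thesis unfolding x_def y_def t_def N_def l_def .
qed



definition nval :: "nat \<Rightarrow> int\<times>int\<times>int \<Rightarrow> real" where
  "nval q F = (case F of (A,B,C) \<Rightarrow> of_int A - of_int (tt q) * of_int B / 2 + of_int (NN q) * of_int C)"
definition Fset :: "nat \<Rightarrow> real \<Rightarrow> (int\<times>int\<times>int) set" where
  "Fset q n = {F. (case F of (A,B,C) \<Rightarrow> 4*A*C - B^2 = int q \<and> A > 0) \<and> nval q F = n}"
definition phi :: "nat \<Rightarrow> real \<Rightarrow> int\<times>int\<times>int \<Rightarrow> real\<times>real" where
  "phi q n F = (case F of (A,B,C) \<Rightarrow> (lam q * (of_int B - of_int (tt q) * of_int C), n - real q * of_int C / 2))"
definition Sset :: "nat \<Rightarrow> real \<Rightarrow> (int\<times>int\<times>int\<times>int) set" where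
  "Sset q n = {M \<in> SL2Z. psi q M \<in> Fset q n}"
definition Eset :: "nat \<Rightarrow> (int\<times>int\<times>int\<times>int) set" where
  "Eset q = {V \<in> SL2Z. psi q V = (NN q, tt q, 1)}"
definition pr :: "int\<times>int\<times>int\<times>int \<Rightarrow> (int\<times>int\<times>int\<times>int) set" where
  "pr M = {M, mneg M}"

lemma reduce:
  assumes q: "q \<in> qs"
  shows "4*A*C - B^2 = int q \<Longrightarrow> A > 0 \<Longrightarrow> \<exists>U\<in>SL2Z. fmat (A,B,C) U = (1, tt q, NN q)"
proof (induction "nat A" arbitrary: A B C rule: less_induct)
  case less
  define k where "k = (A - B) div (2*A)"
  define B' where "B' = B + 2*A*k"
  define C' where "C' = A*k^2 + B*k + C"
  have T: "fmat (A,B,C) (1,k,0,1) = (A,B',C')" by (simp add: B'_def C'_def power2_eq_square algebra_simps)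
  have T1: "(1,k,0,1) \<in> SL2Z" by (simp add: SL2Z_def)
  have dm: "A - B = 2*A*k + (A - B) mod (2*A)" by (simp add: k_def)
  have "(A - B) mod (2*A) \<ge> 0" "(A - B) mod (2*A) < 2*A" using less.prems by simp_all
  hence bnd: "-A < B'" "B' \<le> A" using dm by (simp_all add: B'_def)
  have "disc (A,B',C') = disc (A,B,C)"
    using disc_fmat[OF T1, of "(A,B,C)"] by (simp only: T)
  hence d': "4*A*C' - B'^2 = int q" using less.prems(1) by simp
  show ?case
  proof (cases "C' < A")
    case True
    have "int q > 0" using q by (auto simp: qs_def)
    hence "4*A*C' > 0" using d' zero_le_power2[of B'] by linarith
    hence C'pos: "C' > 0" using less.prems(2) by (simp add: zero_less_mult_iff)
    have S: "fmat (A,B',C') (0,-1,1,0) = (C', -B', A)" by simp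
    have S1: "(0,-1,1,0) \<in> SL2Z" by (simp add: SL2Z_def)
    have d'': "4*C'*A - (-B')^2 = int q" using d' by (simp add: algebra_simps)
    obtain U where U: "U \<in> SL2Z" "fmat (C',-B',A) U = (1, tt q, NN q)"
      using less.hyps[where A = C' and B = "-B'" and C = A] True C'pos d'' by auto
    have "fmat (A,B,C) (mmul (1,k,0,1) (mmul (0,-1,1,0) U)) = (1, tt q, NN q)"
      by (simp only: fmat_comp[symmetric] T S U(2))
    moreover have "mmul (1,k,0,1) (mmul (0,-1,1,0) U) \<in> SL2Z"
      by (intro SL_mmul T1 S1 U(1))
    ultimately show ?thesis by blast
  next
    case False
    have "A = 1 \<and> B' = tt q \<and> C' = NN q"
      by (rule reduced_unique[OF q bnd]) (use False d' in auto)
    hence "fmat (A,B,C) (1,k,0,1) = (1, tt q, NN q)" using T by simp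
    thus ?thesis using T1 by blast
  qed
qed

lemma trm_trm[simp]: "trm (trm M) = M" by (cases M) simp

lemma surj_forms:
  assumes q: "q \<in> qs" and d: "4*A*C - B^2 = int q" and A: "A > 0"
  shows "\<exists>M\<in>SL2Z. psi q M = (A,B,C)"
proof -
  obtain U where U: "U \<in> SL2Z" "fmat (A,B,C) U = (1, tt q, NN q)" using reduce[OF q d A] by blast
  have U0: "fmat (1, tt q, NN q) (tt q, 1, -1, 0) = (NN q, tt q, 1)" by (simp add: power2_eq_square)
  define V where "V = mmul U (tt q, 1, -1, 0)"
  have V: "V \<in> SL2Z" unfolding V_def by (intro SL_mmul U(1)) (simp add: SL2Z_def)
  have fV: "fmat (A,B,C) V = (NN q, tt q, 1)" unfolding V_def by (simp only: fmat_comp[symmetric] U(2) U0)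
  have "fmat (NN q, tt q, 1) (adj V) = (A,B,C)"
    by (simp only: fV[symmetric] fmat_comp mmul_adj(1)[OF V] fmat_id)
  hence "psi q (trm (adj V)) = (A,B,C)" by (simp add: psi_def)
  moreover have "trm (adj V) \<in> SL2Z" using SL_adj V by blast
  ultimately show ?thesis by blast
qed


lemma nval_simp[simp]: "nval q (A,B,C) = of_int A - of_int (tt q) * of_int B / 2 + of_int (NN q) * of_int C"
  by (simp add: nval_def)

lemma psi_props:
  assumes q: "q \<in> qs" and M: "M \<in> SL2Z" and P: "psi q M = (A,B,C)"
  shows "4*A*C - B^2 = int q" "A > 0" "C > 0"
proof -
  obtain a b c d where Md: "M = (a,b,c,d)" by (cases M) auto
  show d: "4*A*C - B^2 = int q" using psi_disc[OF q M] P by simp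
  show C: "C > 0" using moeb_psi(1)[OF q M[unfolded Md] P[unfolded Md]] .
  have "int q > 0" using qfacts(6)[OF q] by simp
  hence "4*A*C > 0" using d zero_le_power2[of B] by linarith
  thus "A > 0" using C by (simp add: zero_less_mult_iff)
qed

lemma Rval_nval:
  assumes q: "q \<in> qs" and M: "M \<in> SL2Z"
  shows "Rval q {M, mneg M} = nval q (psi q M)"
proof -
  obtain a b c d where Md: "M = (a,b,c,d)" by (cases M) auto
  obtain A B C where P: "psi q M = (A,B,C)" by (cases "psi q M") auto
  show ?thesis using Rval_psi[OF q M[unfolded Md] P[unfolded Md]] P Md by simp
qed

lemma theta_phi:
  assumes q: "q \<in> qs" and M: "M \<in> SL2Z" and nv: "nval q (psi q M) = n" and hn: "n \<noteq> real q / 2"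
  shows "theta q {M, mneg M} = Arg (Complex (fst (phi q n (psi q M))) (snd (phi q n (psi q M))))"
proof -
  obtain a b c d where Md: "M = (a,b,c,d)" by (cases M) auto
  obtain A B C where P: "psi q M = (A,B,C)" by (cases "psi q M") auto
  have "nval q (A,B,C) \<noteq> real q / 2" using nv hn P by simp
  hence "of_int A - of_int (tt q) * of_int B / 2 + of_int (NN q) * of_int C \<noteq> real q / 2" by simp
  note th = theta_psi[OF q M[unfolded Md] P[unfolded Md] this]
  have "nval q (A,B,C) = n" using nv P by simp
  thus ?thesis using th P Md by (simp add: phi_def)
qed

lemma mneg_props:
  "M \<in> SL2Z \<Longrightarrow> mneg M \<in> SL2Z" "psi q (mneg M) = psi q M" "mneg (mneg M) = M"
  "M \<in> SL2Z \<Longrightarrow> mneg M \<noteq> M"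
  by (cases M; auto simp: mneg_def SL2Z_def psi_simp power2_eq_square)+

lemma pr_eq: "pr M' = pr M \<longleftrightarrow> M' = M \<or> M' = mneg M"
proof
  assume "pr M' = pr M"
  hence "M' \<in> {M, mneg M}" unfolding pr_def by blast
  thus "M' = M \<or> M' = mneg M" by simp
next
  assume "M' = M \<or> M' = mneg M"
  thus "pr M' = pr M" unfolding pr_def using mneg_props(3)[of M] by auto
qed

lemma Gamma_eq:
  assumes q: "q \<in> qs"
  shows "Gamma_n q n = pr ` Sset q n"
proof
  show "Gamma_n q n \<subseteq> pr ` Sset q n"
  proof
    fix g assume "g \<in> Gamma_n q n"
    then obtain M where M: "M \<in> SL2Z" "g = {M, mneg M}" "Rval q g = n"
      unfolding Gamma_n_def PSL2Z_def by auto
    have "psi q M \<in> Fset q n" using psi_props[OF q M(1)] Rval_nval[OF q M(1)] M(2,3)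
      unfolding Fset_def by (cases "psi q M") auto
    thus "g \<in> pr ` Sset q n" using M unfolding Sset_def pr_def by auto
  qed
next
  show "pr ` Sset q n \<subseteq> Gamma_n q n"
  proof
    fix g assume "g \<in> pr ` Sset q n"
    then obtain M where M: "M \<in> SL2Z" "psi q M \<in> Fset q n" "g = {M, mneg M}"
      unfolding Sset_def pr_def by auto
    have "Rval q g = n" using M Rval_nval[OF q M(1)] unfolding Fset_def by auto
    moreover have "g \<in> PSL2Z" unfolding PSL2Z_def using M(1,3) by blast
    ultimately show "g \<in> Gamma_n q n" unfolding Gamma_n_def by auto
  qed
qed

lemma int_abs_le_sq: "\<bar>x::int\<bar> \<le> x^2"
proof (cases "x = 0")
  case False
  hence "1 \<le> \<bar>x\<bar>" by simp
  hence "\<bar>x\<bar> * 1 \<le> \<bar>x\<bar> * \<bar>x\<bar>" by (intro mult_left_mono) auto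
  thus ?thesis by (simp add: power2_eq_square abs_mult_self_eq)
qed simp

lemma Qbound:
  assumes q: "q \<in> qs" and h: "NN q * X^2 + tt q * X * Y + Y^2 = m"
  shows "\<bar>X\<bar> \<le> 4*m" "\<bar>Y\<bar> \<le> 4*m"
proof -
  have e4: "4*m = (2*Y + tt q*X)^2 + int q * X^2"
    using qfacts(1,2)[OF q] h[symmetric] by (simp add: power2_eq_square algebra_simps)
  have q1: "int q \<ge> 1" using qfacts(6)[OF q] by simp
  have "int q * X^2 \<ge> X^2" using q1 by (simp add: mult_right_mono[of 1 "int q" "X^2", simplified])
  hence X2: "X^2 \<le> 4*m" using e4 zero_le_power2[of "2*Y + tt q*X"] by linarith
  thus X: "\<bar>X\<bar> \<le> 4*m" using int_abs_le_sq[of X] by linarith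
  have "(2*Y + tt q*X)^2 \<le> 4*m" using e4 zero_le_power2[of X] q1
    by (smt (verit) mult_nonneg_nonneg zero_le_power2)
  hence s: "\<bar>2*Y + tt q*X\<bar> \<le> 4*m" using int_abs_le_sq[of "2*Y + tt q*X"] by linarith
  have "tt q = 0 \<or> tt q = 1" using qfacts(1)[OF q] by (metis mult_cancel_right1 mult_eq_0_iff)
  hence "\<bar>tt q*X\<bar> \<le> \<bar>X\<bar>" by auto
  hence "\<bar>2*Y\<bar> \<le> 8*m" using s X by linarith
  thus "\<bar>Y\<bar> \<le> 4*m" by linarith
qed

lemma finite_fiber:
  assumes q: "q \<in> qs"
  shows "finite {M \<in> SL2Z. psi q M = F}"
proof -
  obtain A B C where F: "F = (A,B,C)" by (cases F) auto
  define K where "K = 4*\<bar>A\<bar> + 4*\<bar>C\<bar>"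
  have "{M \<in> SL2Z. psi q M = F} \<subseteq> {-K..K} \<times> {-K..K} \<times> {-K..K} \<times> {-K..K}"
  proof
    fix M assume "M \<in> {M \<in> SL2Z. psi q M = F}"
    then obtain a b c d where Md: "M = (a,b,c,d)" and P: "psi q (a,b,c,d) = (A,B,C)"
      using F by (cases M) auto
    have eA: "NN q * a^2 + tt q * a * b + b^2 = A" and eC: "NN q * c^2 + tt q * c * d + d^2 = C"
      using P by (simp_all add: psi_simp)
    note b1 = Qbound[OF q eA] and b2 = Qbound[OF q eC]
    show "M \<in> {-K..K} \<times> {-K..K} \<times> {-K..K} \<times> {-K..K}"
      using b1 b2 unfolding Md K_def by auto
  qed
  thus ?thesis by (rule finite_subset) auto
qed


lemma mmul_1_left[simp]: "mmul (1,0,0,1) M = M" by (cases M) simp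
lemma trm_1[simp]: "trm (1,0,0,1) = (1,0,0,1)" by simp

lemma psi_mmul_E:
  assumes V: "psi q V = (NN q, tt q, 1)"
  shows "psi q (mmul M0 V) = psi q M0"
proof -
  have "psi q (mmul M0 V) = fmat (NN q, tt q, 1) (mmul (trm V) (trm M0))" unfolding psi_def trm_mmul ..
  also have "\<dots> = fmat (psi q V) (trm M0)" unfolding psi_def fmat_comp ..
  also have "\<dots> = psi q M0" unfolding V by (simp only: psi_def)
  finally show ?thesis .
qed

lemma fiber_eq:
  assumes M0: "M0 \<in> SL2Z"
  shows "{M \<in> SL2Z. psi q M = psi q M0} = mmul M0 ` Eset q"
proof
  show "mmul M0 ` Eset q \<subseteq> {M \<in> SL2Z. psi q M = psi q M0}"
  proof
    fix M assume "M \<in> mmul M0 ` Eset q"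
    then obtain V where V: "V \<in> SL2Z" "psi q V = (NN q, tt q, 1)" "M = mmul M0 V"
      unfolding Eset_def by blast
    show "M \<in> {M \<in> SL2Z. psi q M = psi q M0}"
      using SL_mmul[OF M0 V(1)] psi_mmul_E[OF V(2)] V(3) by simp
  qed
next
  show "{M \<in> SL2Z. psi q M = psi q M0} \<subseteq> mmul M0 ` Eset q"
  proof
    fix M assume "M \<in> {M \<in> SL2Z. psi q M = psi q M0}"
    hence M: "M \<in> SL2Z" "psi q M = psi q M0" by auto
    define V where "V = mmul (adj M0) M"
    have VS: "V \<in> SL2Z" unfolding V_def by (intro SL_mmul SL_adj M0 M(1))
    have MV: "mmul M0 V = M" unfolding V_def mmul_assoc[symmetric] mmul_adj(1)[OF M0] by simp
    have "psi q V = fmat (NN q, tt q, 1) (mmul (trm M) (trm (adj M0)))" unfolding V_def psi_def trm_mmul ..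
    also have "\<dots> = fmat (psi q M0) (trm (adj M0))" unfolding M(2)[symmetric] unfolding psi_def fmat_comp ..
    also have "\<dots> = fmat (NN q, tt q, 1) (trm (mmul (adj M0) M0))" unfolding psi_def fmat_comp trm_mmul ..
    also have "\<dots> = (NN q, tt q, 1)" unfolding mmul_adj(2)[OF M0] by simp
    finally have "V \<in> Eset q" using VS unfolding Eset_def by auto
    thus "M \<in> mmul M0 ` Eset q" using MV by force
  qed
qed

lemma inj_mmul: "M0 \<in> SL2Z \<Longrightarrow> inj_on (mmul M0) X"
proof (rule inj_onI)
  fix V1 V2 assume M0: "M0 \<in> SL2Z" and e: "mmul M0 V1 = mmul M0 V2"
  have "mmul (adj M0) (mmul M0 V1) = mmul (adj M0) (mmul M0 V2)" using e by simp
  thus "V1 = V2" unfolding mmul_assoc[symmetric] mmul_adj(2)[OF M0] by simp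
qed

lemma card_fiber:
  assumes M0: "M0 \<in> SL2Z"
  shows "card {M \<in> SL2Z. psi q M = psi q M0} = card (Eset q)"
  unfolding fiber_eq[OF M0] by (rule card_image[OF inj_mmul[OF M0]])

lemma Eset_props:
  assumes q: "q \<in> qs"
  shows "finite (Eset q)" "card (Eset q) > 0"
proof -
  show f: "finite (Eset q)" unfolding Eset_def by (rule finite_fiber[OF q])
  have "(1,0,0,1) \<in> Eset q" unfolding Eset_def SL2Z_def by (simp add: psi_simp)
  thus "card (Eset q) > 0" using f card_gt_0_iff by blast
qed

lemma tt01: "q \<in> qs \<Longrightarrow> tt q = 0 \<or> tt q = 1"
  using qfacts(1) by (metis mult_cancel_right1 mult_eq_0_iff)

lemma nval_lower:
  assumes q: "q \<in> qs" and d: "4*A*C - B^2 = int q" and A: "A > 0"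
  shows "C > 0" "\<bar>B\<bar> < A + C" "nval q (A,B,C) > (of_int A + of_int C)/2"
proof -
  have "int q > 0" using qfacts(6)[OF q] by simp
  hence "4*A*C > 0" using d zero_le_power2[of B] by linarith
  thus C: "C > 0" using A by (simp add: zero_less_mult_iff)
  have "B^2 < 4*A*C" using d \<open>int q > 0\<close> by linarith
  also have "4*A*C \<le> (A + C)^2"
  proof -
    have "(A+C)^2 - 4*A*C = (A-C)^2" by (simp add: power2_eq_square algebra_simps)
    thus ?thesis using zero_le_power2[of "A-C"] by linarith
  qed
  finally have "\<bar>B\<bar>^2 < (A+C)^2" by simp
  thus B: "\<bar>B\<bar> < A + C" by (rule power2_less_imp_less) (use A C in simp)
  have N1: "real_of_int (NN q) \<ge> 1" using qfacts(8)[OF q] by simp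
  have "real_of_int (NN q) * of_int C \<ge> of_int C" using N1 C by simp
  moreover have "real_of_int (tt q) * of_int B \<le> of_int \<bar>B\<bar>" using tt01[OF q] by auto
  moreover have "real_of_int \<bar>B\<bar> < of_int A + of_int C" using B by linarith
  ultimately show "nval q (A,B,C) > (of_int A + of_int C)/2" by simp
qed

lemma finite_Fset:
  assumes q: "q \<in> qs"
  shows "finite (Fset q n)"
proof -
  define K where "K = \<lceil>2*n\<rceil>"
  have "Fset q n \<subseteq> {-K..K} \<times> {-K..K} \<times> {-K..K}"
  proof
    fix F assume F: "F \<in> Fset q n"
    obtain A B C where Fd: "F = (A,B,C)" by (cases F) auto
    have d: "4*A*C - B^2 = int q" and A: "A > 0" and nv: "nval q (A,B,C) = n"
      using F unfolding Fset_def Fd by auto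
    note L = nval_lower[OF q d A]
    have "of_int A + of_int C < 2*n" using L(3) nv by simp
    hence "A + C < K" unfolding K_def by linarith
    thus "F \<in> {-K..K} \<times> {-K..K} \<times> {-K..K}" using L(1,2) A unfolding Fd by auto
  qed
  thus ?thesis by (rule finite_subset) auto
qed

lemma Sset_props:
  assumes q: "q \<in> qs"
  shows "finite (Sset q n)" "psi q ` Sset q n = Fset q n"
proof -
  have "Sset q n = (\<Union>F\<in>Fset q n. {M \<in> SL2Z. psi q M = F})" unfolding Sset_def by auto
  thus "finite (Sset q n)" using finite_Fset[OF q] finite_fiber[OF q] by auto
  show "psi q ` Sset q n = Fset q n"
  proof
    show "psi q ` Sset q n \<subseteq> Fset q n" unfolding Sset_def by auto
    show "Fset q n \<subseteq> psi q ` Sset q n"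
    proof
      fix F assume F: "F \<in> Fset q n"
      obtain A B C where Fd: "F = (A,B,C)" by (cases F) auto
      have "4*A*C - B^2 = int q" "A > 0" using F unfolding Fset_def Fd by auto
      then obtain M where "M \<in> SL2Z" "psi q M = (A,B,C)" using surj_forms[OF q] by blast
      thus "F \<in> psi q ` Sset q n" using F Fd unfolding Sset_def by force
    qed
  qed
qed


lemma Nset_repr:
  assumes q: "q \<in> qs" and n: "n \<in> Nset q"
  obtains A0 B0 C0 where "4*A0*C0 - B0^2 = int q" "A0 > 0" "nval q (A0,B0,C0) = n"
proof -
  obtain g where g: "g \<in> PSL2Z" "n = Rval q g" using n unfolding Nset_def by auto
  then obtain M where M: "M \<in> SL2Z" "g = {M, mneg M}" unfolding PSL2Z_def by auto
  obtain A0 B0 C0 where P: "psi q M = (A0,B0,C0)" by (cases "psi q M") auto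
  show ?thesis using that psi_props[OF q M(1) P] Rval_nval[OF q M(1)] g M P by auto
qed

lemma circle_id:
  fixes A B C t N l qq n :: real
  assumes "t = 0 \<or> t = 1" "N = (qq + t)/4" "qq = 4*A*C - B^2" "n = A - t*B/2 + N*C" "l^2 = qq/4"
  shows "(l*(B - t*C))^2 + (n - qq*C/2)^2 = n^2 - 4*l^4"
proof -
  have e: "l^4 = (l^2)^2" by (simp flip: power_mult)
  show ?thesis
  using assms(1) unfolding e power_mult_distrib assms(5) assms(4) assms(2) assms(3)
  by (elim disjE) (simp_all add: field_simps power2_eq_square)
qed

lemma circle_id2:
  fixes AA B C t N l qq n :: real
  assumes "t = 0 \<or> t = 1" "N = (qq + t)/4" "n = (AA - t*B + 2*N*C)/2" "l^2 = qq/4" "qq > 0"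
    and c: "(l*(B - t*C))^2 + (n - qq*C/2)^2 = n^2 - 4*l^4"
  shows "2*AA*C - B^2 = qq"
proof -
  have e: "l^4 = (l^2)^2" by (simp flip: power_mult)
  have "(l*(B - t*C))^2 + (n - qq*C/2)^2 - (n^2 - 4*l^4) = (qq/4) * (qq + B^2 - 2*AA*C)"
    using assms(1) unfolding e power_mult_distrib assms(4) assms(3) assms(2)
    by (elim disjE) (simp_all add: field_simps power2_eq_square)
  hence "(qq/4) * (qq + B^2 - 2*AA*C) = 0" using c by simp
  thus ?thesis using assms(5) by simp
qed

lemma bij_phi:
  assumes q: "q \<in> qs" and n: "n \<in> Nset q"
  shows "bij_betw (phi q n) (Fset q n) (Lset q n)"
proof -
  obtain A0 B0 C0 where F0: "4*A0*C0 - B0^2 = int q" "A0 > 0" "nval q (A0,B0,C0) = n"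
    using Nset_repr[OF q n] by blast
  define t where "t = real_of_int (tt q)"
  define N where "N = real_of_int (NN q)"
  define l where "l = lam q"
  have tt: "t*t = t" unfolding t_def using qfacts(1)[OF q] by (simp flip: of_int_mult)
  have "real_of_int (4 * NN q) = real_of_int (int q + tt q)" using qfacts(2)[OF q] by simp
  hence N4: "4 * N = real q + t" unfolding N_def t_def by simp
  have ll: "l^2 = real q / 4" unfolding l_def using qfacts(5)[OF q] .
  have lpos: "l > 0" unfolding l_def using qfacts(4)[OF q] .
  have qpos: "real q > 0" using qfacts(6)[OF q] by simp
  have npos: "n > 0" using nval_lower(3)[OF q F0(1,2)] nval_lower(1)[OF q F0(1,2)] F0(2,3) by simp
  have phi_simp: "phi q n (A,B,C) = (l * (of_int B - t * of_int C), n - real q * of_int C / 2)" for A B C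
    unfolding phi_def l_def t_def by simp
  show ?thesis
  proof (rule bij_betw_imageI)
    show "inj_on (phi q n) (Fset q n)"
    proof (rule inj_onI)
      fix F1 F2 assume F1: "F1 \<in> Fset q n" and F2: "F2 \<in> Fset q n" and e: "phi q n F1 = phi q n F2"
      obtain A1 B1 C1 where F1d: "F1 = (A1,B1,C1)" by (cases F1) auto
      obtain A2 B2 C2 where F2d: "F2 = (A2,B2,C2)" by (cases F2) auto
      have e1: "l * (of_int B1 - t * of_int C1) = l * (of_int B2 - t * of_int C2)"
        and e2: "n - real q * of_int C1 / 2 = n - real q * of_int C2 / 2"
        using e unfolding F1d F2d phi_simp by auto
      have "C1 = C2" using e2 qpos by simp
      moreover have "B1 = B2" using e1 lpos \<open>C1 = C2\<close> by simp
      moreover have "nval q (A1,B1,C1) = nval q (A2,B2,C2)" using F1 F2 unfolding F1d F2d Fset_def by simp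
      ultimately have "A1 = A2" by simp
      thus "F1 = F2" using \<open>B1 = B2\<close> \<open>C1 = C2\<close> F1d F2d by simp
    qed
  next
    show "phi q n ` Fset q n = Lset q n"
    proof
      show "phi q n ` Fset q n \<subseteq> Lset q n"
      proof
        fix p assume "p \<in> phi q n ` Fset q n"
        then obtain A B C where F: "(A,B,C) \<in> Fset q n" and p: "p = phi q n (A,B,C)" by auto
        have d: "4*A*C - B^2 = int q" and nv: "nval q (A,B,C) = n" using F unfolding Fset_def by auto
        have "real_of_int (4*A*C - B^2) = real_of_int (int q)" using d by simp
        hence dr: "4* of_int A* of_int C - (of_int B)^2 = real q" by simp
        have nr: "n = of_int A - t * of_int B / 2 + N * of_int C" using nv unfolding t_def N_def by simp
        have t01r: "t = 0 \<or> t = 1" unfolding t_def using tt01[OF q] by auto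
        have c1: "(l * (of_int B - t * of_int C))^2 + (n - real q * of_int C / 2)^2 = n^2 - 4*l^4"
          by (rule circle_id[OF t01r _ _ nr ll]) (use N4 dr in simp_all)
        have c2: "(n - real q * of_int C / 2 - n) / (2 * l^2) = of_int (- C)"
          using ll qpos by (simp add: field_simps)
        have c3: "l * (of_int B - t * of_int C) / l = of_int (B - tt q * C)"
          using lpos unfolding t_def by simp
        show "p \<in> Lset q n" unfolding p phi_simp Lset_def using c1 c2 c3
          by (simp add: l_def)
      qed
    next
      show "Lset q n \<subseteq> phi q n ` Fset q n"
      proof
        fix p assume p: "p \<in> Lset q n"
        obtain x y where pd: "p = (x,y)" by (cases p) auto
        have circ: "x^2 + y^2 = n^2 - 4*l^4" and i1: "(y - n) / (2*l^2) \<in> \<int>" and i2: "x / l \<in> \<int>"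
          using p unfolding pd Lset_def l_def by auto
        obtain k where k: "(y - n) / (2*l^2) = of_int k" using i1 Ints_cases by metis
        obtain j where j: "x / l = of_int j" using i2 Ints_cases by metis
        define C where "C = -k"
        define B where "B = j + tt q * C"
        define A2 where "A2 = 2*A0 - tt q*B0 + 2*NN q*C0 + tt q*B - 2*NN q*C"
        have ye: "y = n - real q * of_int C / 2" using k ll qpos unfolding C_def by (simp add: field_simps)
        have xe: "x = l * (of_int B - t * of_int C)" using j lpos unfolding B_def t_def by (simp add: field_simps)
        have n0: "n = of_int A0 - t * of_int B0 / 2 + N * of_int C0" using F0(3) unfolding t_def N_def by simp
        have A2r: "2*n = of_int A2 - t * of_int B + 2*N* of_int C" unfolding A2_def n0 t_def N_def by simp
        have t01r: "t = 0 \<or> t = 1" unfolding t_def using tt01[OF q] by auto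
        have "2* of_int A2* of_int C - (of_int B)^2 = real q"
          by (rule circle_id2[where N=N and qq="real q" and n=n and AA="of_int A2" and B="of_int B" and C="of_int C" and l=l and t=t, OF t01r _ _ ll qpos])
             (use circ xe ye N4 A2r in simp_all)
        hence "real_of_int (2*A2*C - B^2) = real_of_int (int q)" by simp
        hence dA2: "2*A2*C - B^2 = int q" by (simp only: of_int_eq_iff)
        have d0: "4*A0*C0 - B0^2 = int q" by (rule F0(1))
        have "even A2"
        proof (cases "tt q = 0")
          case True thus ?thesis unfolding A2_def by simp
        next
          case False
          hence t1: "tt q = 1" using tt01[OF q] by simp
          hence qo: "odd (int q)" using qfacts(7)[OF q] by presburger
          have "odd B"
          proof
            assume "even B" hence "even (2*A2*C - B^2)" by simp
            thus False using dA2 qo by simp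
          qed
          moreover have "odd B0"
          proof
            assume "even B0" hence "even (4*A0*C0 - B0^2)" by simp
            thus False using d0 qo by simp
          qed
          ultimately show ?thesis unfolding A2_def t1 by simp
        qed
        then obtain A where A: "A2 = 2*A" by blast
        have "y < n"
        proof (rule ccontr)
          assume "\<not> y < n" hence "y \<ge> n" by simp
          hence "y^2 \<ge> n^2" using npos by (simp add: power_mono)
          moreover have "l^4 > 0" using lpos by simp
          ultimately show False using circ zero_le_power2[of x] by linarith
        qed
        hence "real q * of_int C / 2 > 0" using ye by simp
        hence Cp: "C > 0" using qpos by (simp add: zero_less_mult_iff)
        have dF: "4*A*C - B^2 = int q" using dA2 A by simp
        have "int q > 0" using qpos by simp
        hence "4*A*C > 0" using dF zero_le_power2[of B] by linarith
        hence Ap: "A > 0" using Cp by (simp add: zero_less_mult_iff)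
        have "nval q (A,B,C) = n" using A2r A unfolding t_def N_def by simp
        hence "(A,B,C) \<in> Fset q n" using dF Ap unfolding Fset_def by simp
        moreover have "phi q n (A,B,C) = p" unfolding phi_simp pd using xe ye by simp
        ultimately show "p \<in> phi q n ` Fset q n" by force
      qed
    qed
  qed
qed


lemma sum_pr:
  assumes fin: "finite S" and cl: "\<And>M. M \<in> S \<Longrightarrow> mneg M \<in> S" and SL: "S \<subseteq> SL2Z"
  shows "(\<Sum>M\<in>S. G (pr M)) = 2 * (\<Sum>g\<in>pr ` S. (G g :: real))"
proof -
  have "(\<Sum>M\<in>S. G (pr M)) = (\<Sum>g\<in>pr ` S. \<Sum>M\<in>{x \<in> S. pr x = g}. G (pr M))"
    by (rule sum.image_gen[OF fin])
  also have "\<dots> = (\<Sum>g\<in>pr ` S. 2 * G g)"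
  proof (rule sum.cong[OF refl])
    fix g assume "g \<in> pr ` S"
    then obtain M0 where M0: "M0 \<in> S" "g = pr M0" by auto
    have set: "{x \<in> S. pr x = g} = {M0, mneg M0}"
      using M0 cl[OF M0(1)] pr_eq[of _ M0] by auto
    have ne: "M0 \<noteq> mneg M0" using mneg_props(4)[of M0] M0 SL by auto
    have "pr (mneg M0) = pr M0" using pr_eq by auto
    thus "(\<Sum>M\<in>{x \<in> S. pr x = g}. G (pr M)) = 2 * G g"
      unfolding set using ne M0 by simp
  qed
  also have "\<dots> = 2 * (\<Sum>g\<in>pr ` S. G g)" by (simp add: sum_distrib_left)
  finally show ?thesis .
qed

lemma sum_psi:
  assumes q: "q \<in> qs"
  shows "(\<Sum>M\<in>Sset q n. f (psi q M)) = real (card (Eset q)) * (\<Sum>F\<in>Fset q n. (f F :: real))"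
proof -
  have "(\<Sum>M\<in>Sset q n. f (psi q M)) = (\<Sum>F\<in>psi q ` Sset q n. \<Sum>M\<in>{x \<in> Sset q n. psi q x = F}. f (psi q M))"
    by (rule sum.image_gen[OF Sset_props(1)[OF q]])
  also have "\<dots> = (\<Sum>F\<in>Fset q n. real (card (Eset q)) * f F)"
    unfolding Sset_props(2)[OF q]
  proof (rule sum.cong[OF refl])
    fix F assume F: "F \<in> Fset q n"
    have "F \<in> psi q ` Sset q n" using F Sset_props(2)[OF q, of n] by simp
    then obtain M0 where M0: "M0 \<in> Sset q n" "psi q M0 = F" by blast
    have M0S: "M0 \<in> SL2Z" using M0 unfolding Sset_def by auto
    have set: "{x \<in> Sset q n. psi q x = F} = {M \<in> SL2Z. psi q M = psi q M0}"
      using F M0 unfolding Sset_def by auto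
    have "(\<Sum>M\<in>{x \<in> Sset q n. psi q x = F}. f (psi q M)) = (\<Sum>M\<in>{x \<in> Sset q n. psi q x = F}. f F)"
      by (rule sum.cong) auto
    also have "\<dots> = real (card (Eset q)) * f F" using card_fiber[OF M0S] unfolding set by simp
    finally show "(\<Sum>M\<in>{x \<in> Sset q n. psi q x = F}. f (psi q M)) = real (card (Eset q)) * f F" .
  qed
  also have "\<dots> = real (card (Eset q)) * (\<Sum>F\<in>Fset q n. f F)" by (simp add: sum_distrib_left)
  finally show ?thesis .
qed

lemma key:
  assumes q: "q \<in> qs" and n: "n \<in> Nset q" and hn: "n \<noteq> 2 * (lam q)^2"
  shows "(\<Sum>g\<in>Gamma_n q n. if P (theta q g) then 1 else 0) / real (card (Gamma_n q n))
       = (\<Sum>p\<in>Lset q n. if P (Arg (Complex (fst p) (snd p))) then 1 else 0) / real (card (Lset q n))"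
proof -
  define h where "h = (\<lambda>p::real\<times>real. if P (Arg (Complex (fst p) (snd p))) then 1 else (0::real))"
  define G where "G = (\<lambda>g. if P (theta q g) then 1 else (0::real))"
  define K where "K = real (card (Eset q))"
  have Kp: "K > 0" unfolding K_def using Eset_props(2)[OF q] by simp
  have hn': "n \<noteq> real q / 2" using hn qfacts(5)[OF q] by simp
  have fin: "finite (Sset q n)" by (rule Sset_props(1)[OF q])
  have cl: "\<And>M. M \<in> Sset q n \<Longrightarrow> mneg M \<in> Sset q n" unfolding Sset_def using mneg_props by auto
  have SL: "Sset q n \<subseteq> SL2Z" unfolding Sset_def by auto
  have GS: "G (pr M) = h (phi q n (psi q M))" if M: "M \<in> Sset q n" for M
  proof -
    have "M \<in> SL2Z" "nval q (psi q M) = n" using M unfolding Sset_def Fset_def by auto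
    thus ?thesis unfolding G_def h_def pr_def using theta_phi[OF q _ _ hn'] by simp
  qed
  have s1: "(\<Sum>M\<in>Sset q n. G (pr M)) = 2 * (\<Sum>g\<in>Gamma_n q n. G g)"
    unfolding Gamma_eq[OF q] by (rule sum_pr[OF fin cl SL])
  have c1: "(\<Sum>M\<in>Sset q n. (\<lambda>_. 1::real) (pr M)) = 2 * (\<Sum>g\<in>Gamma_n q n. (\<lambda>_. 1::real) g)"
    unfolding Gamma_eq[OF q] by (rule sum_pr[OF fin cl SL])
  have s2: "(\<Sum>M\<in>Sset q n. G (pr M)) = K * (\<Sum>F\<in>Fset q n. h (phi q n F))"
  proof -
    have "(\<Sum>M\<in>Sset q n. G (pr M)) = (\<Sum>M\<in>Sset q n. h (phi q n (psi q M)))"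
      by (rule sum.cong[OF refl]) (rule GS)
    also have "\<dots> = K * (\<Sum>F\<in>Fset q n. h (phi q n F))" unfolding K_def by (rule sum_psi[OF q])
    finally show ?thesis .
  qed
  have c2: "(\<Sum>M\<in>Sset q n. (\<lambda>_. 1::real) (psi q M)) = K * (\<Sum>F\<in>Fset q n. (\<lambda>_. 1::real) F)"
    unfolding K_def by (rule sum_psi[OF q])
  note bij = bij_phi[OF q n]
  have s3: "(\<Sum>F\<in>Fset q n. h (phi q n F)) = (\<Sum>p\<in>Lset q n. h p)"
    by (rule sum.reindex_bij_betw[OF bij])
  have c3: "card (Fset q n) = card (Lset q n)" by (rule bij_betw_same_card[OF bij])
  have cardG: "real (card (Gamma_n q n)) = K * real (card (Lset q n)) / 2"
    using c1 c2 c3 by simp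
  have sumG: "(\<Sum>g\<in>Gamma_n q n. G g) = K * (\<Sum>p\<in>Lset q n. h p) / 2"
    using s1 s2 s3 by simp
  have "(\<Sum>g\<in>Gamma_n q n. G g) / real (card (Gamma_n q n)) = (\<Sum>p\<in>Lset q n. h p) / real (card (Lset q n))"
    unfolding sumG cardG using Kp by simp
  thus ?thesis unfolding G_def h_def .
qed

theorem corollary2p7:
  fixes q :: nat and n :: real
  assumes "q \<in> qs" and "n \<in> Nset q" and "n \<noteq> 2 * (lam q)^2"
  shows "(SUP (a,l)\<in>arcs.
            \<bar>(\<Sum>g\<in>Gamma_n q n. if in_arc a l (theta q g) then 1 else 0) / real (card (Gamma_n q n))
              - l / (2 * pi)\<bar>)
       = (SUP (a,l)\<in>arcs.
            \<bar>(\<Sum>p\<in>Lset q n. if in_arc a l (Arg (Complex (fst p) (snd p))) then 1 else 0)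
                / real (card (Lset q n))
              - l / (2 * pi)\<bar>)"
  by (rule SUP_cong[OF refl]) (auto simp: key[OF assms])

end
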